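(* Let $\Phi$ be a second-order constraint problem and $J$ an interpretation of the index symbols. (1) Soundness: if $J\models\mathrm{sk}(\Phi)$, then $(J,\xi_{sk})$ is a model of $\Phi$. (2) Completeness: if $(J,\xi)$ is a model of $\Phi$ for some second-order substitution $\xi$, then $J'\models\mathrm{sk}(\Phi)$ for some interpretation $J'$ extending $J$ to the skolem functions $f_\alpha$.
   Context: Index terms over index variables $i$ and index symbols $g$ (including $0,\mathsf s,+$); an interpretation $J$ maps each $k$-ary $g$ to a total weakly monotone function $\mathbb N^k\to\mathbb N$ ($0,\mathsf s,+$ standard); $a\le_J b$ iff $[a]^\beta_J\le[b]^\beta_J$ for every assignment $\beta$. Second-order index terms: $a::=i\mid\alpha\mid g(a_1,\dots,a_{\mathrm{ar}(g)})$ with $\alpha$ second-order index variables; $\mathrm{Var}(a)$ and $\mathrm{SOVar}(a)$ are the sets of first- and second-order variables of $a$. An SOCP $\Phi$ is a set of inequalities $a\le b$ and occurrence constraints $i\notin\alpha$. A second-order substitution $\xi$ maps second-order variables to index terms without second-order variables. $(J,\xi)$ is a model of $\Phi$ if $a\xi\le_J b\xi$ for all inequalities and $i\notin\mathrm{Var}(\xi(\alpha))$ for all occurrence constraints in $\Phi$. A first-order constraint problem (FOCP) is a set of inequalities without second-order variables; $J\models\Psi$ means $a\le_J b$ for all $(a\le b)\in\Psi$. Skolemisation: let $V(\beta)$ (for second-order variables $\beta$ of $\Phi$) be the least sets with, for every $(a\le b)\in\Phi$ such that $\beta\in\mathrm{SOVar}(b)$, $\mathrm{Var}(a)\subseteq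 V(\beta)$ and $V(\alpha)\subseteq V(\beta)$ for each $\alpha\in\mathrm{SOVar}(a)$; set $\mathrm{SV}(\beta)=V(\beta)\setminus\{i\mid(i\notin\beta)\in\Phi\}$. For each second-order variable $\alpha$ of $\Phi$ let $f_\alpha$ be a fresh index symbol of arity $|\mathrm{SV}(\alpha)|$; the skolem substitution is $\xi_{sk}(\alpha)=f_\alpha(i_1,\dots,i_k)$ where $\mathrm{SV}(\alpha)=\{i_1,\dots,i_k\}$ (in a fixed order). The skolemisation of $\Phi$ is the FOCP $\mathrm{sk}(\Phi)=\{a\xi_{sk}\le b\xi_{sk}\mid(a\le b)\in\Phi\}$. *)

theory Defs
  imports Main
begin

text \<open>The symbols 0, s, + are built in
as dedicated constructors and always receive their standard meaning.\<close>

datatype ('g,'v,'w) itm =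
    IV 'v
  | SOV 'w
  | IZ
  | IS "('g,'v,'w) itm"
  | IP "('g,'v,'w) itm" "('g,'v,'w) itm"
  | IA 'g "('g,'v,'w) itm list"

fun vars :: "('g,'v,'w) itm \<Rightarrow> 'v set" where
  "vars (IV i) = {i}"
| "vars (SOV a) = {}"
| "vars IZ = {}"
| "vars (IS t) = vars t"
| "vars (IP s t) = vars s \<union> vars t"
| "vars (IA g ts) = \<Union> (set (map vars ts))"

fun sovars :: "('g,'v,'w) itm \<Rightarrow> 'w set" where
  "sovars (IV i) = {}"
| "sovars (SOV a) = {a}"
| "sovars IZ = {}"
| "sovars (IS t) = sovars t"
| "sovars (IP s t) = sovars s \<union> sovars t"
| "sovars (IA g ts) = \<Union> (set (map sovars ts))"

fun wf_tm :: "('g \<Rightarrow> nat) \<Rightarrow> ('g,'v,'w) itm \<Rightarrow> bool" where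
  "wf_tm ar (IV i) = True"
| "wf_tm ar (SOV a) = True"
| "wf_tm ar IZ = True"
| "wf_tm ar (IS t) = wf_tm ar t"
| "wf_tm ar (IP s t) = (wf_tm ar s \<and> wf_tm ar t)"
| "wf_tm ar (IA g ts) = (length ts = ar g \<and> list_all id (map (wf_tm ar) ts))"

fun subst :: "('w \<Rightarrow> ('g,'v,'w) itm) \<Rightarrow> ('g,'v,'w) itm \<Rightarrow> ('g,'v,'w) itm" where
  "subst \<xi> (IV i) = IV i"
| "subst \<xi> (SOV a) = \<xi> a"
| "subst \<xi> IZ = IZ"
| "subst \<xi> (IS t) = IS (subst \<xi> t)"
| "subst \<xi> (IP s t) = IP (subst \<xi> s) (subst \<xi> t)"
| "subst \<xi> (IA g ts) = IA g (map (subst \<xi>) ts)"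

text \<open>Evaluation [a]^beta_J (second-order variables never occur in the terms
this is applied to; they are mapped to 0 only for totality).\<close>
fun eval :: "('g \<Rightarrow> nat list \<Rightarrow> nat) \<Rightarrow> ('v \<Rightarrow> nat) \<Rightarrow> ('g,'v,'w) itm \<Rightarrow> nat" where
  "eval J \<beta> (IV i) = \<beta> i"
| "eval J \<beta> (SOV a) = 0"
| "eval J \<beta> IZ = 0"
| "eval J \<beta> (IS t) = Suc (eval J \<beta> t)"
| "eval J \<beta> (IP s t) = eval J \<beta> s + eval J \<beta> t"
| "eval J \<beta> (IA g ts) = J g (map (eval J \<beta>) ts)"

text \<open>An interpretation maps each k-ary symbol to a (total) weakly monotone
function N^k -> N (represented on argument lists of length k).\<close>
definition interp :: "('g \<Rightarrow> nat) \<Rightarrow> ('g \<Rightarrow> nat list \<Rightarrow> nat) \<Rightarrow> bool" where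
  "interp ar J \<longleftrightarrow> (\<forall>g xs ys. length xs = ar g \<longrightarrow> length ys = ar g \<longrightarrow>
       list_all2 (\<le>) xs ys \<longrightarrow> J g xs \<le> J g ys)"

definition le_J :: "('g \<Rightarrow> nat list \<Rightarrow> nat) \<Rightarrow> ('g,'v,'w) itm \<Rightarrow> ('g,'v,'w) itm \<Rightarrow> bool" where
  "le_J J a b \<longleftrightarrow> (\<forall>\<beta>. eval J \<beta> a \<le> eval J \<beta> b)"

datatype ('g,'v,'w) constr =
    Le "('g,'v,'w) itm" "('g,'v,'w) itm"
  | NotIn 'v 'w

definition wf_socp :: "('g \<Rightarrow> nat) \<Rightarrow> ('g,'v,'w) constr set \<Rightarrow> bool" where
  "wf_socp ar \<Phi> \<longleftrightarrow> (\<forall>a b. Le a b \<in> \<Phi> \<longrightarrow> wf_tm ar a \<and> wf_tm ar b)"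

definition so_subst :: "('g \<Rightarrow> nat) \<Rightarrow> ('w \<Rightarrow> ('g,'v,'w) itm) \<Rightarrow> bool" where
  "so_subst ar \<xi> \<longleftrightarrow> (\<forall>a. sovars (\<xi> a) = {} \<and> wf_tm ar (\<xi> a))"

definition is_model ::
  "('g \<Rightarrow> nat list \<Rightarrow> nat) \<Rightarrow> ('w \<Rightarrow> ('g,'v,'w) itm) \<Rightarrow> ('g,'v,'w) constr set \<Rightarrow> bool" where
  "is_model J \<xi> \<Phi> \<longleftrightarrow>
     (\<forall>a b. Le a b \<in> \<Phi> \<longrightarrow> le_J J (subst \<xi> a) (subst \<xi> b)) \<and>
     (\<forall>i \<alpha>. NotIn i \<alpha> \<in> \<Phi> \<longrightarrow> i \<notin> vars (\<xi> \<alpha>))"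

definition fo_models :: "('g \<Rightarrow> nat list \<Rightarrow> nat) \<Rightarrow> ('g,'v,'w) constr set \<Rightarrow> bool" where
  "fo_models J \<Psi> \<longleftrightarrow> (\<forall>a b. Le a b \<in> \<Psi> \<longrightarrow> le_J J a b)"

inductive inV :: "('g,'v,'w) constr set \<Rightarrow> 'w \<Rightarrow> 'v \<Rightarrow> bool" for \<Phi> where
  base: "Le a b \<in> \<Phi> \<Longrightarrow> \<beta> \<in> sovars b \<Longrightarrow> i \<in> vars a \<Longrightarrow> inV \<Phi> \<beta> i"
| step: "Le a b \<in> \<Phi> \<Longrightarrow> \<beta> \<in> sovars b \<Longrightarrow> \<alpha> \<in> sovars a \<Longrightarrow> inV \<Phi> \<alpha> i \<Longrightarrow> inV \<Phi> \<beta> i"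

definition Vset :: "('g,'v,'w) constr set \<Rightarrow> 'w \<Rightarrow> 'v set" where
  "Vset \<Phi> \<beta> = {i. inV \<Phi> \<beta> i}"

definition SV :: "('g,'v,'w) constr set \<Rightarrow> 'w \<Rightarrow> 'v set" where
  "SV \<Phi> \<beta> = Vset \<Phi> \<beta> - {i. NotIn i \<beta> \<in> \<Phi>}"

text \<open>The extended signature: original symbols Inl g, skolem symbols
f_alpha = Inr alpha.  ord alpha lists SV(alpha) in the fixed order.\<close>
definition sk_arity :: "('g \<Rightarrow> nat) \<Rightarrow> ('w \<Rightarrow> 'v list) \<Rightarrow> 'g + 'w \<Rightarrow> nat" where
  "sk_arity ar ord = case_sum ar (\<lambda>\<alpha>. length (ord \<alpha>))"

definition xi_sk :: "('w \<Rightarrow> 'v list) \<Rightarrow> 'w \<Rightarrow> ('g + 'w,'v,'w) itm" where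
  "xi_sk ord \<alpha> = IA (Inr \<alpha>) (map IV (ord \<alpha>))"

definition embed_tm :: "('g,'v,'w) itm \<Rightarrow> ('g + 'w,'v,'w) itm" where
  "embed_tm = map_itm Inl id id"

definition embed_socp :: "('g,'v,'w) constr set \<Rightarrow> ('g + 'w,'v,'w) constr set" where
  "embed_socp = image (map_constr Inl id id)"

definition sk :: "('w \<Rightarrow> 'v list) \<Rightarrow> ('g,'v,'w) constr set \<Rightarrow> ('g + 'w,'v,'w) constr set" where
  "sk ord \<Phi> = {Le (subst (xi_sk ord) (embed_tm a)) (subst (xi_sk ord) (embed_tm b)) | a b. Le a b \<in> \<Phi>}"

end

theory Submission
  imports Defs
begin

fun ev :: "('g \<Rightarrow> nat list \<Rightarrow> nat) \<Rightarrow> ('v \<Rightarrow> nat) \<Rightarrow> ('w \<Rightarrow> nat) \<Rightarrow> ('g,'v,'w) itm \<Rightarrow> nat" where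
  "ev J \<beta> \<sigma> (IV i) = \<beta> i"
| "ev J \<beta> \<sigma> (SOV a) = \<sigma> a"
| "ev J \<beta> \<sigma> IZ = 0"
| "ev J \<beta> \<sigma> (IS t) = Suc (ev J \<beta> \<sigma> t)"
| "ev J \<beta> \<sigma> (IP s t) = ev J \<beta> \<sigma> s + ev J \<beta> \<sigma> t"
| "ev J \<beta> \<sigma> (IA g ts) = J g (map (ev J \<beta> \<sigma>) ts)"

lemma eval_ev: "eval J \<beta> t = ev J \<beta> (\<lambda>_. 0) t"
  by (induction t) (auto cong: map_cong)

lemma eval_subst: "eval J \<beta> (subst \<xi> t) = ev J \<beta> (\<lambda>\<alpha>. eval J \<beta> (\<xi> \<alpha>)) t"
  by (induction t) (auto cong: map_cong)

lemma eval_sk: "eval J' \<beta> (subst (xi_sk ord) (embed_tm t)) =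
   ev (\<lambda>g. J' (Inl g)) \<beta> (\<lambda>\<alpha>. J' (Inr \<alpha>) (map \<beta> (ord \<alpha>))) t"
  unfolding embed_tm_def
  by (induction t) (auto simp: xi_sk_def cong: map_cong)

lemma ev_mono:
  assumes J: "interp ar J"
  shows "wf_tm ar t \<Longrightarrow> (\<forall>i\<in>vars t. \<beta> i \<le> \<beta>' i) \<Longrightarrow> (\<forall>\<alpha>\<in>sovars t. \<sigma> \<alpha> \<le> \<sigma>' \<alpha>)
    \<Longrightarrow> ev J \<beta> \<sigma> t \<le> ev J \<beta>' \<sigma>' t"
proof (induction t)
  case (IA g ts)
  have "list_all2 (\<le>) (map (ev J \<beta> \<sigma>) ts) (map (ev J \<beta>' \<sigma>') ts)"
  proof (rule list_all2_all_nthI)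
    fix n assume n: "n < length (map (ev J \<beta> \<sigma>) ts)"
    then have m: "ts ! n \<in> set ts" by simp
    have "wf_tm ar (ts ! n)" using IA.prems(1) m by (simp add: list_all_iff)
    moreover have "\<forall>i\<in>vars (ts ! n). \<beta> i \<le> \<beta>' i" using IA.prems(2) m by auto
    moreover have "\<forall>\<alpha>\<in>sovars (ts ! n). \<sigma> \<alpha> \<le> \<sigma>' \<alpha>" using IA.prems(3) m by auto
    ultimately have "ev J \<beta> \<sigma> (ts ! n) \<le> ev J \<beta>' \<sigma>' (ts ! n)" using IA.IH m by blast
    then show "map (ev J \<beta> \<sigma>) ts ! n \<le> map (ev J \<beta>' \<sigma>') ts ! n" using n by simp
  qed simp
  then show ?case using IA.prems J unfolding interp_def by auto
qed auto

lemma map_of_zip_mono: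
  "list_all2 (\<le>) xs ys \<Longrightarrow> length l = length xs \<Longrightarrow>
   rel_option (\<le>) (map_of (zip l xs) i) (map_of (zip l ys) (i::'v)) "
proof (induction l arbitrary: xs ys)
  case Nil then show ?case by simp
next
  case (Cons a l)
  then obtain x xs' y ys' where "xs = x # xs'" "ys = y # ys'"
    by (metis length_Suc_conv list_all2_Cons1)
  with Cons show ?case by auto
qed

theorem mainTheorem11:
  fixes \<Phi> :: "('g,'v,'w) constr set" and ar :: "'g \<Rightarrow> nat" and ord :: "'w \<Rightarrow> 'v list"
  assumes wf: "wf_socp ar \<Phi>"
    and ord: "\<forall>\<alpha>. distinct (ord \<alpha>) \<and> set (ord \<alpha>) = SV \<Phi> \<alpha>"
  shows "(\<forall>J. interp (sk_arity ar ord) J \<and> fo_models J (sk ord \<Phi>)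
            \<longrightarrow> is_model J (xi_sk ord) (embed_socp \<Phi>))
       \<and> (\<forall>J \<xi>. interp ar J \<and> so_subst ar \<xi> \<and> is_model J \<xi> \<Phi>
            \<longrightarrow> (\<exists>J'. interp (sk_arity ar ord) J' \<and> (\<forall>g. J' (Inl g) = J g)
                      \<and> fo_models J' (sk ord \<Phi>)))"
proof (intro conjI allI impI)
  fix J :: "'g + 'w \<Rightarrow> nat list \<Rightarrow> nat"
  assume "interp (sk_arity ar ord) J \<and> fo_models J (sk ord \<Phi>)"
  then have fo: "fo_models J (sk ord \<Phi>)" by blast
  show "is_model J (xi_sk ord) (embed_socp \<Phi>)"
    unfolding is_model_def
  proof (intro conjI allI impI)
    fix a b assume "Le a b \<in> embed_socp \<Phi>"
    then obtain c where c: "c \<in> \<Phi>" "map_constr Inl id id c = Le a b"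
      unfolding embed_socp_def by auto
    then obtain a0 b0 where "c = Le a0 b0" "a = embed_tm a0" "b = embed_tm b0"
    proof (cases c)
      case (Le x y) then show ?thesis using c(2) that unfolding embed_tm_def by simp
    next
      case (NotIn x y) then show ?thesis using c(2) by simp
    qed
    with c fo show "le_J J (subst (xi_sk ord) a) (subst (xi_sk ord) b)"
    proof -
      have "Le (subst (xi_sk ord) (embed_tm a0)) (subst (xi_sk ord) (embed_tm b0)) \<in> sk ord \<Phi>"
        using c \<open>c = Le a0 b0\<close> unfolding sk_def by auto
      then show ?thesis using fo \<open>a = embed_tm a0\<close> \<open>b = embed_tm b0\<close>
        unfolding fo_models_def by simp
    qed
  next
    fix i \<alpha> assume "NotIn i \<alpha> \<in> embed_socp \<Phi>"
    then obtain c where c: "(NotIn i \<alpha> :: ('g+'w,'v,'w) constr) = map_constr Inl id id c" "c \<in> \<Phi>"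
      unfolding embed_socp_def by (rule imageE) (rule that)
    then have "NotIn i \<alpha> \<in> \<Phi>"
    proof (cases c)
      case (Le x y) then show ?thesis using c(1) by simp
    next
      case (NotIn x y) then show ?thesis using c by simp
    qed
    then show "i \<notin> vars (xi_sk ord \<alpha>)"
      using ord by (auto simp: xi_sk_def SV_def)
  qed
next
  fix J :: "'g \<Rightarrow> nat list \<Rightarrow> nat" and \<xi> :: "'w \<Rightarrow> ('g,'v,'w) itm"
  assume H: "interp ar J \<and> so_subst ar \<xi> \<and> is_model J \<xi> \<Phi>"
  then have J: "interp ar J" and wfx: "\<And>\<alpha>. wf_tm ar (\<xi> \<alpha>)" and M: "is_model J \<xi> \<Phi>"
    by (auto simp: so_subst_def)
  define asg :: "'w \<Rightarrow> nat list \<Rightarrow> 'v \<Rightarrow> nat" where "asg \<alpha> xs i = (case map_of (zip (ord \<alpha>) xs) i of None \<Rightarrow> 0 | Some n \<Rightarrow> n)"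
    for \<alpha> xs i
  define J' where "J' g = (case g of Inl g \<Rightarrow> J g | Inr \<alpha> \<Rightarrow> (\<lambda>xs. eval J (asg \<alpha> xs) (\<xi> \<alpha>)))"
    for g
  define rs where "rs \<alpha> \<beta> i = (if i \<in> SV \<Phi> \<alpha> then \<beta> i else 0)" for \<alpha> and \<beta> :: "'v \<Rightarrow> nat" and i
  have evmono: "\<And>(t::('g,'v,'w) itm) \<beta> \<beta>' \<sigma> \<sigma>'. wf_tm ar t \<Longrightarrow> (\<forall>i\<in>vars t. \<beta> i \<le> \<beta>' i) \<Longrightarrow> (\<forall>\<alpha>\<in>sovars t. \<sigma> \<alpha> \<le> \<sigma>' \<alpha>)
    \<Longrightarrow> ev J \<beta> \<sigma> t \<le> ev J \<beta>' \<sigma>' t"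
    using ev_mono[OF J] by blast
  have evalmono: "\<And>(t::('g,'v,'w) itm) \<beta> \<beta>'. wf_tm ar t \<Longrightarrow> (\<forall>i\<in>vars t. \<beta> i \<le> \<beta>' i) \<Longrightarrow> eval J \<beta> t \<le> eval J \<beta>' t"
    unfolding eval_ev using evmono by auto
  have J'r: "J' (Inr \<alpha>) (map \<beta> (ord \<alpha>)) = eval J (rs \<alpha> \<beta>) (\<xi> \<alpha>)" for \<alpha> \<beta>
  proof -
    have "asg \<alpha> (map \<beta> (ord \<alpha>)) = rs \<alpha> \<beta>"
      using ord by (auto simp: asg_def rs_def map_of_zip_map)
    then show ?thesis by (simp add: J'_def)
  qed
  show "\<exists>J'. interp (sk_arity ar ord) J' \<and> (\<forall>g. J' (Inl g) = J g) \<and> fo_models J' (sk ord \<Phi>)"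
  proof (rule exI[of _ J'], intro conjI allI)
    show "J' (Inl g) = J g" for g by (simp add: J'_def)
    show "interp (sk_arity ar ord) J'"
      unfolding interp_def
    proof (intro allI impI)
      fix g and xs ys :: "nat list"
      assume l: "length xs = sk_arity ar ord g" "length ys = sk_arity ar ord g"
        and le: "list_all2 (\<le>) xs ys"
      show "J' g xs \<le> J' g ys"
      proof (cases g)
        case (Inl h) then show ?thesis using J l le by (simp add: J'_def interp_def sk_arity_def)
      next
        case (Inr \<alpha>)
        have "asg \<alpha> xs i \<le> asg \<alpha> ys i" for i
        proof -
          have r: "rel_option (\<le>) (map_of (zip (ord \<alpha>) xs) i) (map_of (zip (ord \<alpha>) ys) i)"
            using map_of_zip_mono[OF le, of "ord \<alpha>" i] l Inr by (simp add: sk_arity_def)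
          show ?thesis unfolding asg_def
            using r by (cases "map_of (zip (ord \<alpha>) xs) i"; cases "map_of (zip (ord \<alpha>) ys) i") auto
        qed
        then show ?thesis using Inr evalmono[OF wfx] by (simp add: J'_def)
      qed
    qed
    show "fo_models J' (sk ord \<Phi>)"
      unfolding fo_models_def
    proof (intro allI impI)
      fix x y assume "Le x y \<in> sk ord \<Phi>"
      then obtain a b where ab: "Le a b \<in> \<Phi>" and x: "x = subst (xi_sk ord) (embed_tm a)"
        and y: "y = subst (xi_sk ord) (embed_tm b)"
        unfolding sk_def by auto
      from wf ab have wfa: "wf_tm ar a" and wfb: "wf_tm ar b" by (auto simp: wf_socp_def)
      have JL: "(\<lambda>g. J' (Inl g)) = J" by (simp add: J'_def)
      show "le_J J' x y"
        unfolding le_J_def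
      proof
        fix \<beta>
        define \<sigma> where "\<sigma> \<alpha> = eval J (rs \<alpha> \<beta>) (\<xi> \<alpha>)" for \<alpha>
        define W where "W = vars a \<union> (\<Union>\<alpha>\<in>sovars a. Vset \<Phi> \<alpha>)"
        define \<gamma> where "\<gamma> i = (if i \<in> W then \<beta> i else 0)" for i
        define \<sigma>\<gamma> where "\<sigma>\<gamma> \<alpha> = eval J \<gamma> (\<xi> \<alpha>)" for \<alpha>
        have W: "W \<subseteq> Vset \<Phi> \<beta>'" if "\<beta>' \<in> sovars b" for \<beta>'
        proof
          fix i assume "i \<in> W"
          then consider "i \<in> vars a" | \<alpha> where "\<alpha> \<in> sovars a" "inV \<Phi> \<alpha> i"
            unfolding W_def Vset_def by auto
          then show "i \<in> Vset \<Phi> \<beta>'"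
          proof cases
            case 1 then show ?thesis unfolding Vset_def using inV.base[OF ab that] by blast
          next
            case 2 then show ?thesis unfolding Vset_def using inV.step[OF ab that] by blast
          qed
        qed
        have ex: "eval J' \<beta> x = ev J \<beta> \<sigma> a" "eval J' \<beta> y = ev J \<beta> \<sigma> b"
          unfolding x y eval_sk JL J'r \<sigma>_def by simp_all
        have "ev J \<beta> \<sigma> a \<le> ev J \<gamma> \<sigma>\<gamma> a"
        proof (rule evmono[OF wfa])
          show "\<forall>i\<in>vars a. \<beta> i \<le> \<gamma> i" by (simp add: \<gamma>_def W_def)
          show "\<forall>\<alpha>\<in>sovars a. \<sigma> \<alpha> \<le> \<sigma>\<gamma> \<alpha>"
          proof
            fix \<alpha> assume "\<alpha> \<in> sovars a"
            then have "SV \<Phi> \<alpha> \<subseteq> W" by (auto simp: W_def SV_def)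
            then show "\<sigma> \<alpha> \<le> \<sigma>\<gamma> \<alpha>" unfolding \<sigma>_def \<sigma>\<gamma>_def
              by (intro evalmono[OF wfx]) (auto simp: rs_def \<gamma>_def)
          qed
        qed
        also have "\<dots> = eval J \<gamma> (subst \<xi> a)" by (simp add: eval_subst \<sigma>\<gamma>_def[abs_def])
        also have "\<dots> \<le> eval J \<gamma> (subst \<xi> b)" using M ab by (auto simp: is_model_def le_J_def)
        also have "\<dots> = ev J \<gamma> \<sigma>\<gamma> b" by (simp add: eval_subst \<sigma>\<gamma>_def[abs_def])
        also have "\<dots> \<le> ev J \<beta> \<sigma> b"
        proof (rule evmono[OF wfb])
          show "\<forall>i\<in>vars b. \<gamma> i \<le> \<beta> i" by (simp add: \<gamma>_def)
          show "\<forall>\<alpha>\<in>sovars b. \<sigma>\<gamma> \<alpha> \<le> \<sigma> \<alpha>"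
          proof
            fix \<alpha> assume \<alpha>: "\<alpha> \<in> sovars b"
            show "\<sigma>\<gamma> \<alpha> \<le> \<sigma> \<alpha>" unfolding \<sigma>_def \<sigma>\<gamma>_def
            proof (intro evalmono[OF wfx] ballI)
              fix i assume i: "i \<in> vars (\<xi> \<alpha>)"
              show "\<gamma> i \<le> rs \<alpha> \<beta> i"
              proof (cases "i \<in> W")
                case True
                then have "i \<in> Vset \<Phi> \<alpha>" using W[OF \<alpha>] by auto
                moreover have "NotIn i \<alpha> \<notin> \<Phi>" using M i by (auto simp: is_model_def)
                ultimately show ?thesis by (simp add: \<gamma>_def rs_def SV_def)
              qed (simp add: \<gamma>_def)
            qed
          qed
        qed
        finally show "eval J' \<beta> x \<le> eval J' \<beta> y" using ex by simp
      qed
    qed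
  qed
qed

end
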